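(* Let $(a,b)$ be a coprime pair of positive integers. Then: (1) If $A(a,b)=(m,n)$, then $W(a,b)=w(m,n)$, i.e. $W(a,b)=w(A(a,b))$. (2) $A$ is involutive: if $A(a,b)=(m,n)$ then $A(m,n)=(a,b)$. (3) $A$ is symmetric: if $A(a,b)=(m,n)$ then $A(b,a)=(n,m)$. (4) $A(a,1)=(a,1)$, and if $a$ is odd, $A(a,2)=\left(\frac{a+1}{2},\frac{a+3}{2}\right)$.
   Context: For a coprime pair $(a,b)$ of positive integers, set $(a_0,b_0)=(a,b)$, $(m_0,n_0)=(1,1)$, and inductively: if $a_i>b_i$, let $w_{i+1}=L$, $(a_{i+1},b_{i+1})=(a_i-b_i,b_i)$, $(m_{i+1},n_{i+1})=(m_i+n_i,n_i)$; if $a_i<b_i$, let $w_{i+1}=R$, $(a_{i+1},b_{i+1})=(a_i,b_i-a_i)$, $(m_{i+1},n_{i+1})=(m_i,n_i+m_i)$. The process stops at the first $N$ with $(a_N,b_N)=(1,1)$. Define the word $w(a,b)=w_1w_2\cdots w_N$ in the letters $L,R$, the pair $A(a,b)=(m_N,n_N)$, and the reversed word $W(a,b)=W_1\cdots W_N$ with $W_i=w_{N+1-i}$. *)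

theory Defs
  imports Main
begin

datatype letter = L | R

text \<open>The word w(a,b). The process stops at (1,1); the extra guards (a = 0, b = 0, a = b)
  only make the function total and never fire before (1,1) for coprime positive (a,b).\<close>
function wword :: "nat \<Rightarrow> nat \<Rightarrow> letter list" where
  "wword a b =
     (if a = 0 \<or> b = 0 \<or> (a = 1 \<and> b = 1) \<or> a = b then []
      else if a > b then L # wword (a - b) b
      else R # wword a (b - a))"
  by auto
termination by (relation "measure (\<lambda>(a, b). a + b)") auto

function Aiter :: "nat \<Rightarrow> nat \<Rightarrow> nat \<Rightarrow> nat \<Rightarrow> nat \<times> nat" where
  "Aiter a b m n =
     (if a = 0 \<or> b = 0 \<or> (a = 1 \<and> b = 1) \<or> a = b then (m, n)
      else if a > b then Aiter (a - b) b (m + n) n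
      else Aiter a (b - a) m (n + m))"
  by auto
termination by (relation "measure (\<lambda>(a, b, _, _). a + b)") auto

definition Amap :: "nat \<Rightarrow> nat \<Rightarrow> nat \<times> nat" where
  "Amap a b = Aiter a b 1 1"

definition Wword :: "nat \<Rightarrow> nat \<Rightarrow> letter list" where
  "Wword a b = rev (wword a b)"

end

theory Submission
  imports Defs
begin

declare wword.simps[simp del] Aiter.simps[simp del]

lemma wword11[simp]: "wword (Suc 0) (Suc 0) = []"
  by (subst wword.simps) simp

fun stp :: "letter \<Rightarrow> nat \<times> nat \<Rightarrow> nat \<times> nat" where
  "stp L (x, y) = (x + y, y)"
| "stp R (x, y) = (x, x + y)"

fun ev' :: "letter list \<Rightarrow> nat \<times> nat \<Rightarrow> nat \<times> nat" where
  "ev' [] p = p"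
| "ev' (c # v) p = stp c (ev' v p)"

lemma ev'_app: "ev' (u @ v) p = ev' u (ev' v p)"
  by (induction u) auto

lemma Aiter_ev: "Aiter a b m n = ev' (rev (wword a b)) (m, n)"
proof (induction a b m n rule: Aiter.induct)
  case (1 a b m n)
  show ?case
    using 1 by (subst Aiter.simps, subst wword.simps) (auto simp: ev'_app add.commute)
qed

lemma Amap_ev: "Amap a b = ev' (rev (wword a b)) (1, 1)"
  by (simp add: Amap_def Aiter_ev)

lemma ev_pos: "fst (ev' v (1,1)) > 0 \<and> snd (ev' v (1,1)) > 0"
proof (induction v)
  case Nil then show ?case by simp
next
  case (Cons c v) then show ?case
    by (cases c; cases "ev' v (1,1)") auto
qed

lemma wword_ev: "wword (fst (ev' v (1,1))) (snd (ev' v (1,1))) = v"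
proof (induction v)
  case Nil then show ?case by simp
next
  case (Cons c v)
  obtain x y where e: "ev' v (1,1) = (x, y)" by (cases "ev' v (1,1)")
  have "x > 0" "y > 0" using ev_pos[of v] e by auto
  then have "wword (x + y) y = L # wword x y" "wword x (x + y) = R # wword x y"
    by (subst wword.simps; simp)+
  then show ?case using Cons e
    by (cases c) auto
qed

lemma ev_wword:
  "a > 0 \<Longrightarrow> b > 0 \<Longrightarrow> coprime a b \<Longrightarrow> ev' (wword a b) (1,1) = (a, b)"
proof (induction a b rule: wword.induct)
  case (1 a b)
  show ?case
  proof (cases "a = b")
    case True
    then have "a = 1" using 1(3-5) by simp
    then show ?thesis using True by (simp add: wword.simps)
  next
    case False
    show ?thesis
    proof (cases "a > b")
      case True
      have c: "coprime (a - b) b"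
        using 1(5) True by (simp add: coprime_iff_gcd_eq_1 gcd_diff1_nat)
      show ?thesis using 1(1)[OF _ True _ _ c] 1(3,4) True False
        by (subst wword.simps) auto
    next
      case F2: False
      have c: "coprime a (b - a)"
        using 1(5) F2 False gcd_diff1_nat[of a b]
        by (simp add: coprime_iff_gcd_eq_1 gcd.commute)
      show ?thesis using 1(2)[OF _ F2 _ _ c] 1(3,4) F2 False
        by (subst wword.simps) auto
    qed
  qed
qed

fun sw :: "letter \<Rightarrow> letter" where "sw L = R" | "sw R = L"

lemma wword_swap: "wword b a = map sw (wword a b)"
proof (induction a b rule: wword.induct)
  case (1 a b)
  show ?case using 1
    by (subst wword.simps, subst (2) wword.simps) auto
qed

lemma ev_swap: "ev' (map sw v) (1,1) = prod.swap (ev' v (1,1))"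
proof (induction v)
  case Nil then show ?case by simp
next
  case (Cons c v) then show ?case
    by (cases c; cases "ev' v (1,1)") auto
qed

lemma wword_a1: "wword (Suc k) 1 = replicate k L"
proof (induction k)
  case 0 then show ?case by (subst wword.simps) simp
next
  case (Suc k) then show ?case by (subst wword.simps) simp
qed

lemma ev_repL: "ev' (replicate k L) (1,1) = (Suc k, 1)"
  by (induction k) auto

lemma wword_a2: "wword (2 * k + 1) 2 = replicate k L @ [R]"
proof (induction k)
  case 0 then show ?case by (subst wword.simps) (simp add: wword.simps[of 1 1])
next
  case (Suc k)
  have "wword (2 * Suc k + 1) 2 = L # wword (2 * k + 1) 2"
    by (subst wword.simps) auto
  then show ?case using Suc by simp
qed

theorem lemma2p1:
  fixes a b m n :: nat
  assumes "a > 0" and "b > 0" and "coprime a b"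
  shows "(Amap a b = (m, n) \<longrightarrow> Wword a b = wword m n)
       \<and> (Amap a b = (m, n) \<longrightarrow> Amap m n = (a, b))
       \<and> (Amap a b = (m, n) \<longrightarrow> Amap b a = (n, m))
       \<and> Amap a 1 = (a, 1)
       \<and> (odd a \<longrightarrow> Amap a 2 = ((a + 1) div 2, (a + 3) div 2))"
proof (intro conjI impI)
  assume h: "Amap a b = (m, n)"
  have e: "ev' (rev (wword a b)) (1,1) = (m, n)" using h by (simp add: Amap_ev)
  show w: "Wword a b = wword m n"
    using wword_ev[of "rev (wword a b)"] e by (simp add: Wword_def)
  show "Amap m n = (a, b)"
    using w ev_wword[OF assms] unfolding Amap_ev Wword_def by (metis rev_rev_ident)
  show "Amap b a = (n, m)"
  proof -
    have "Amap b a = ev' (map sw (rev (wword a b))) (1,1)"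
      by (simp only: Amap_ev wword_swap[of b a] rev_map)
    also have "\<dots> = prod.swap (m, n)" using e by (simp only: ev_swap)
    finally show ?thesis by simp
  qed
next
  obtain k where "a = Suc k" using assms(1) by (cases a) auto
  then show "Amap a 1 = (a, 1)" using wword_a1[of k] ev_repL[of k] by (simp add: Amap_ev)
next
  assume "odd a"
  then obtain k where k: "a = 2 * k + 1" using oddE by blast
  have "Amap a 2 = (k + 1, k + 2)"
    using k wword_a2[of k] ev_repL[of k] by (simp add: Amap_ev)
  then show "Amap a 2 = ((a + 1) div 2, (a + 3) div 2)" using k by simp
qed

end
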